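(* Let $M \subseteq \mathbb{N}_0$ be a semiideal. If $d$ is a difference of $M$, then there is an element $c \in M$ with $c \neq 0$ and $c$ divisible by $d$, such that $c + nd \in M$ for all $n \in \mathbb{N}_0$.
   Context: $\mathbb{N}_0$ denotes the semiring of natural numbers including $0$ with usual addition and multiplication. A semiideal of $\mathbb{N}_0$ is a nonempty subset $M \subseteq \mathbb{N}_0$ such that $m+m' \in M$ and $rm \in M$ for all $m,m' \in M$, $r \in \mathbb{N}_0$ (so $0 \in M$). For a semiideal $M \neq 0$, an element $d \in \mathbb{N} = \mathbb{N}_0\setminus\{0\}$ is called a difference of $M$ if there exist $a, b \in M$ with $a \neq 0$ and $a + d = b$. *)

theory Defs
  imports Main
begin

definition semiideal :: "nat set \<Rightarrow> bool" where
  "semiideal M \<longleftrightarrow> M \<noteq> {} \<and> (\<forall>m\<in>M. \<forall>m'\<in>M. m + m' \<in> M) \<and> (\<forall>m\<in>M. \<forall>r. r * m \<in> M)"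

definition is_difference :: "nat set \<Rightarrow> nat \<Rightarrow> bool" where
  "is_difference M d \<longleftrightarrow> M \<noteq> {0} \<and> d \<noteq> 0 \<and> (\<exists>a\<in>M. \<exists>b\<in>M. a \<noteq> 0 \<and> a + d = b)"

end

theory Submission
  imports Defs
begin

theorem theorem4p2:
  fixes M :: "nat set" and d :: nat
  assumes "semiideal M" and "is_difference M d"
  shows "\<exists>c\<in>M. c \<noteq> 0 \<and> d dvd c \<and> (\<forall>n::nat. c + n * d \<in> M)"
proof -
  from assms(2) obtain a b where a: "a \<in> M" "b \<in> M" "a \<noteq> 0" "a + d = b" and d: "d \<noteq> 0"
    unfolding is_difference_def by blast
  have add: "\<And>x y. x \<in> M \<Longrightarrow> y \<in> M \<Longrightarrow> x + y \<in> M"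
    and mul: "\<And>x r. x \<in> M \<Longrightarrow> r * x \<in> M"
    using assms(1) unfolding semiideal_def by blast+
  define c where "c = (a*d) * a"
  have "c \<in> M" unfolding c_def using mul a by blast
  moreover have "c \<noteq> 0" using a d by (simp add: c_def)
  moreover have "d dvd c" by (simp add: c_def)
  moreover have "c + n * d \<in> M" for n
  proof -
    define q where "q = n div a"
    define r where "r = n mod a"
    have n: "n = q * a + r" by (simp add: q_def r_def)
    have ra: "r < a" using a(3) by (simp add: r_def)
    have "a \<le> a * d" using d by simp
    then have rle: "r \<le> a * d + q * d" using ra by linarith
    have "r * b + (a*d + q*d - r) * a = r * a + r * d + (a*d + q*d - r) * a"
      using a(4) by (simp add: algebra_simps flip: a(4))
    also have "\<dots> = r * d + (r + (a*d + q*d - r)) * a" by (simp add: algebra_simps)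
    also have "\<dots> = r * d + (a*d + q*d) * a" using rle by simp
    also have "\<dots> = c + n * d" by (simp add: c_def n algebra_simps)
    finally have eq: "c + n * d = r * b + (a*d + q*d - r) * a" by simp
    show ?thesis unfolding eq using add mul a by blast
  qed
  ultimately show ?thesis by blast
qed

end
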